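(* A formula $\varphi\in\mathcal{L}$ is derivable in $\mathsf{ConstCKID}$ (resp. $\mathsf{ConstCKMP}$, resp. $\mathsf{ConstCKMPID}$) if and only if it is valid in all constructive Chellas models satisfying property (id) (resp. property (mp), resp. both (id) and (mp)), where (id): for all $X\subseteq W$ and $w,v\in W$, if $wR_Xv$ then $v\in X$; (mp): for all $X\subseteq W$ and $w\in W$, if $w\in X$ then $wR_Xw$.
   Context: Language $\mathcal{L}$: formulas $\varphi ::= p \mid \bot \mid \varphi\wedge\varphi \mid \varphi\vee\varphi \mid \varphi\to\varphi \mid \varphi \mathrel{\Box\!\!\to} \varphi \mid \varphi \mathrel{\Diamond\!\!\to}\varphi$; $\neg\varphi:=\varphi\to\bot$, $\top:=\neg\bot$, $\varphi\leftrightarrow\psi:=(\varphi\to\psi)\wedge(\psi\to\varphi)$. $\mathsf{ConstCK}$: any axiomatisation of intuitionistic propositional logic in $\mathcal{L}$ with modus ponens, plus CM$_\Box$: $(\varphi\mathrel{\Box\!\!\to}\psi\wedge\chi)\to(\varphi\mathrel{\Box\!\!\to}\psi)\wedge(\varphi\mathrel{\Box\!\!\to}\chi)$; CC$_\Box$: $(\varphi\mathrel{\Box\!\!\to}\psi)\wedge(\varphi\mathrel{\Box\!\!\to}\chi)\to(\varphi\mathrel{\Box\!\!\to}\psi\wedge\chi)$; CN$_\Box$: $\varphi\mathrel{\Box\!\!\to}\top$; CN$_\Diamond$: $\neg(\varphi\mathrel{\Diamond\!\!\to}\bot)$; CK$_\Diamond$: $(\varphi\mathrel{\Box\!\!\to}(\psi\to\chi))\to((\varphi\mathrel{\Diamond\!\!\to}\psi)\to(\varphi\mathrel{\Diamond\!\!\to}\chi))$;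 rules RA$_\Box$: from $\varphi\leftrightarrow\rho$ infer $(\varphi\mathrel{\Box\!\!\to}\psi)\leftrightarrow(\rho\mathrel{\Box\!\!\to}\psi)$; RC$_\Box$: from $\psi\leftrightarrow\chi$ infer $(\varphi\mathrel{\Box\!\!\to}\psi)\leftrightarrow(\varphi\mathrel{\Box\!\!\to}\chi)$; RA$_\Diamond$, RC$_\Diamond$: the same with $\mathrel{\Diamond\!\!\to}$. $\mathsf{ConstCKID}$ = $\mathsf{ConstCK}$ + ID$_\Box$: $\varphi\mathrel{\Box\!\!\to}\varphi$. $\mathsf{ConstCKMP}$ = $\mathsf{ConstCK}$ + MP$_\Box$: $(\varphi\mathrel{\Box\!\!\to}\psi)\to(\varphi\to\psi)$ + MP$_\Diamond$: $\varphi\wedge\psi\to(\varphi\mathrel{\Diamond\!\!\to}\psi)$. $\mathsf{ConstCKMPID}$ = $\mathsf{ConstCK}$ + MP$_\Box$, MP$_\Diamond$, ID$_\Box$. A constructive Chellas model is $M=\langle W,\le,R,V\rangle$ with $W$ nonempty, $\le$ reflexive and transitive on $W$, $V:W\to2^{Atm}$ monotone ($w\le w'$ implies $V(w)\subseteq V(w')$), and $R$ associating to each $X\subseteq W$ a binary relation $R_X$ on $W$. Satisfaction: $w\Vdash p$ iff $p\in V(w)$; $w\not\Vdash\bot$; $\wedge,\vee$ pointwise; $w\Vdash\varphi\to\psi$ iff for all $w'\ge w$, $w'\Vdash\varphi$ implies $w'\Vdash\psi$; with $[\varphi]=\{w\mid w\Vdash\varphi\}$: $w\Vdash\varphi\mathrel{\Box\!\!\to}\psi$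 iff for all $w',v$ with $w\le w'$ and $w'R_{[\varphi]}v$, $v\Vdash\psi$; $w\Vdash\varphi\mathrel{\Diamond\!\!\to}\psi$ iff for all $w'\ge w$ there is $v$ with $w'R_{[\varphi]}v$ and $v\Vdash\psi$. A formula is valid in $M$ if satisfied at every world. *)

theory Defs
  imports Main
begin

datatype form =
    Atom nat
  | Bot
  | And form form
  | Or form form
  | Imp form form
  | Box form form
  | Dia form form

definition Neg :: "form \<Rightarrow> form" where "Neg a = Imp a Bot"
definition Top :: form where "Top = Neg Bot"
definition Iff :: "form \<Rightarrow> form \<Rightarrow> form" where "Iff a b = And (Imp a b) (Imp b a)"

inductive derivable :: "form set \<Rightarrow> form \<Rightarrow> bool" for E :: "form set" where
  ax_extra: "a \<in> E \<Longrightarrow> derivable E a"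
| ipc1: "derivable E (Imp a (Imp b a))"
| ipc2: "derivable E (Imp (Imp a (Imp b c)) (Imp (Imp a b) (Imp a c)))"
| ipc3: "derivable E (Imp (And a b) a)"
| ipc4: "derivable E (Imp (And a b) b)"
| ipc5: "derivable E (Imp a (Imp b (And a b)))"
| ipc6: "derivable E (Imp a (Or a b))"
| ipc7: "derivable E (Imp b (Or a b))"
| ipc8: "derivable E (Imp (Imp a c) (Imp (Imp b c) (Imp (Or a b) c)))"
| ipc9: "derivable E (Imp Bot a)"
| mp: "derivable E (Imp a b) \<Longrightarrow> derivable E a \<Longrightarrow> derivable E b"
| CM_box: "derivable E (Imp (Box a (And b c)) (And (Box a b) (Box a c)))"
| CC_box: "derivable E (Imp (And (Box a b) (Box a c)) (Box a (And b c)))"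
| CN_box: "derivable E (Box a Top)"
| CN_dia: "derivable E (Neg (Dia a Bot))"
| CK_dia: "derivable E (Imp (Box a (Imp b c)) (Imp (Dia a b) (Dia a c)))"
| RA_box: "derivable E (Iff a r) \<Longrightarrow> derivable E (Iff (Box a b) (Box r b))"
| RC_box: "derivable E (Iff b c) \<Longrightarrow> derivable E (Iff (Box a b) (Box a c))"
| RA_dia: "derivable E (Iff a r) \<Longrightarrow> derivable E (Iff (Dia a b) (Dia r b))"
| RC_dia: "derivable E (Iff b c) \<Longrightarrow> derivable E (Iff (Dia a b) (Dia a c))"

definition ID_ax :: "form set" where
  "ID_ax = {Box a a | a. True}"

definition MP_ax :: "form set" where
  "MP_ax = {Imp (Box a b) (Imp a b) | a b. True} \<union> {Imp (And a b) (Dia a b) | a b. True}"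

abbreviation ConstCKID :: "form \<Rightarrow> bool" where "ConstCKID \<equiv> derivable ID_ax"
abbreviation ConstCKMP :: "form \<Rightarrow> bool" where "ConstCKMP \<equiv> derivable MP_ax"
abbreviation ConstCKMPID :: "form \<Rightarrow> bool" where "ConstCKMPID \<equiv> derivable (MP_ax \<union> ID_ax)"

text \<open>Only the values of le, R X on W
(and X \<subseteq> W) matter.\<close>

definition chellas_model ::
  "'w set \<Rightarrow> ('w \<Rightarrow> 'w \<Rightarrow> bool) \<Rightarrow> ('w \<Rightarrow> nat set) \<Rightarrow> bool" where
  "chellas_model W le V \<longleftrightarrow>
     W \<noteq> {} \<and>
     (\<forall>w\<in>W. le w w) \<and>
     (\<forall>u\<in>W. \<forall>v\<in>W. \<forall>w\<in>W. le u v \<longrightarrow> le v w \<longrightarrow> le u w) \<and>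
     (\<forall>w\<in>W. \<forall>w'\<in>W. le w w' \<longrightarrow> V w \<subseteq> V w')"

fun sat :: "'w set \<Rightarrow> ('w \<Rightarrow> 'w \<Rightarrow> bool) \<Rightarrow> ('w set \<Rightarrow> 'w \<Rightarrow> 'w \<Rightarrow> bool)
            \<Rightarrow> ('w \<Rightarrow> nat set) \<Rightarrow> 'w \<Rightarrow> form \<Rightarrow> bool" where
  "sat W le R V w (Atom p) = (p \<in> V w)"
| "sat W le R V w Bot = False"
| "sat W le R V w (And a b) = (sat W le R V w a \<and> sat W le R V w b)"
| "sat W le R V w (Or a b) = (sat W le R V w a \<or> sat W le R V w b)"
| "sat W le R V w (Imp a b) =
     (\<forall>w'\<in>W. le w w' \<longrightarrow> sat W le R V w' a \<longrightarrow> sat W le R V w' b)"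
| "sat W le R V w (Box a b) =
     (\<forall>w'\<in>W. \<forall>v\<in>W. le w w' \<longrightarrow> R {u\<in>W. sat W le R V u a} w' v \<longrightarrow> sat W le R V v b)"
| "sat W le R V w (Dia a b) =
     (\<forall>w'\<in>W. le w w' \<longrightarrow> (\<exists>v\<in>W. R {u\<in>W. sat W le R V u a} w' v \<and> sat W le R V v b))"

definition valid_in ::
  "'w set \<Rightarrow> ('w \<Rightarrow> 'w \<Rightarrow> bool) \<Rightarrow> ('w set \<Rightarrow> 'w \<Rightarrow> 'w \<Rightarrow> bool)
   \<Rightarrow> ('w \<Rightarrow> nat set) \<Rightarrow> form \<Rightarrow> bool" where
  "valid_in W le R V a \<longleftrightarrow> (\<forall>w\<in>W. sat W le R V w a)"

definition prop_id :: "'w set \<Rightarrow> ('w set \<Rightarrow> 'w \<Rightarrow> 'w \<Rightarrow> bool) \<Rightarrow> bool" where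
  "prop_id W R \<longleftrightarrow> (\<forall>X. X \<subseteq> W \<longrightarrow> (\<forall>w\<in>W. \<forall>v\<in>W. R X w v \<longrightarrow> v \<in> X))"

definition prop_mp :: "'w set \<Rightarrow> ('w set \<Rightarrow> 'w \<Rightarrow> 'w \<Rightarrow> bool) \<Rightarrow> bool" where
  "prop_mp W R \<longleftrightarrow> (\<forall>X. X \<subseteq> W \<longrightarrow> (\<forall>w\<in>W. w \<in> X \<longrightarrow> R X w w))"

definition valid_class ::
  "'w itself \<Rightarrow> ('w set \<Rightarrow> ('w set \<Rightarrow> 'w \<Rightarrow> 'w \<Rightarrow> bool) \<Rightarrow> bool) \<Rightarrow> form \<Rightarrow> bool" where
  "valid_class T P a \<longleftrightarrow>
     (\<forall>(W::'w set) le R V. chellas_model W le V \<and> P W R \<longrightarrow> valid_in W le R V a)"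

end

theory Submission
  imports Defs
begin

lemma cm_refl: "chellas_model W le V \<Longrightarrow> w \<in> W \<Longrightarrow> le w w"
  unfolding chellas_model_def by blast
lemma cm_trans: "chellas_model W le V \<Longrightarrow> u \<in> W \<Longrightarrow> v \<in> W \<Longrightarrow> w \<in> W \<Longrightarrow> le u v \<Longrightarrow> le v w \<Longrightarrow> le u w"
  unfolding chellas_model_def by blast
lemma cm_mono: "chellas_model W le V \<Longrightarrow> u \<in> W \<Longrightarrow> v \<in> W \<Longrightarrow> le u v \<Longrightarrow> V u \<subseteq> V v"
  unfolding chellas_model_def by blast

lemma persist:
  assumes m: "chellas_model W le V"
  shows "w \<in> W \<Longrightarrow> w' \<in> W \<Longrightarrow> le w w' \<Longrightarrow> sat W le R V w a \<Longrightarrow> sat W le R V w' a"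
proof (induction a arbitrary: w w')
  case (Atom p) then show ?case using cm_mono[OF m] by auto
next
  case (And a b) then show ?case by simp
next
  case (Or a b) then show ?case by simp blast
next
  case Bot then show ?case by simp
next
  case (Imp a b) then show ?case using cm_trans[OF m, of w w'] by auto
next
  case (Box a b) then show ?case using cm_trans[OF m, of w w'] by auto
next
  case (Dia a b) then show ?case using cm_trans[OF m, of w w'] by auto
qed

lemma valid_imp:
  assumes m: "chellas_model W le V"
  shows "valid_in W le R V (Imp a b) \<longleftrightarrow> (\<forall>w\<in>W. sat W le R V w a \<longrightarrow> sat W le R V w b)"
  using cm_refl[OF m] unfolding valid_in_def by auto

lemma valid_iff:
  assumes m: "chellas_model W le V"
  shows "valid_in W le R V (Iff a b) \<longleftrightarrow> (\<forall>w\<in>W. sat W le R V w a \<longleftrightarrow> sat W le R V w b)"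
  using cm_refl[OF m] unfolding valid_in_def Iff_def by auto

lemma
  assumes m: "chellas_model W le V"
  shows s1: "valid_in W le R V (Imp a (Imp b a))"
  and s2: "valid_in W le R V (Imp (Imp a (Imp b c)) (Imp (Imp a b) (Imp a c)))"
  and s5: "valid_in W le R V (Imp a (Imp b (And a b)))"
  and s8: "valid_in W le R V (Imp (Imp a c) (Imp (Imp b c) (Imp (Or a b) c)))"
  and scm: "valid_in W le R V (Imp (Box a (And b c)) (And (Box a b) (Box a c)))"
  and scc: "valid_in W le R V (Imp (And (Box a b) (Box a c)) (Box a (And b c)))"
  and scnd: "valid_in W le R V (Neg (Dia a Bot))"
  and sck: "valid_in W le R V (Imp (Box a (Imp b c)) (Imp (Dia a b) (Dia a c)))"
proof -
  note P = persist[OF m] and T = cm_trans[OF m] and Rf = cm_refl[OF m]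
  show "valid_in W le R V (Imp a (Imp b a))"
    unfolding valid_in_def by (auto intro: P)
  show "valid_in W le R V (Imp (Imp a (Imp b c)) (Imp (Imp a b) (Imp a c)))"
    unfolding valid_in_def
  proof (unfold sat.simps, intro ballI impI)
    fix w w1 w2 w3
    assume "w \<in> W" "w1 \<in> W" "le w w1" and h1: "\<forall>x\<in>W. le w1 x \<longrightarrow> sat W le R V x a \<longrightarrow> (\<forall>y\<in>W. le x y \<longrightarrow> sat W le R V y b \<longrightarrow> sat W le R V y c)"
      and "w2 \<in> W" "le w1 w2" and h2: "\<forall>x\<in>W. le w2 x \<longrightarrow> sat W le R V x a \<longrightarrow> sat W le R V x b"
      and "w3 \<in> W" "le w2 w3" "sat W le R V w3 a"
    then show "sat W le R V w3 c" using T[of w1 w2 w3] Rf[of w3] by blast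
  qed
  show "valid_in W le R V (Imp a (Imp b (And a b)))"
    unfolding valid_in_def by (auto intro: P)
  show "valid_in W le R V (Imp (Imp a c) (Imp (Imp b c) (Imp (Or a b) c)))"
    unfolding valid_in_def
  proof (unfold sat.simps, intro ballI impI)
    fix w w1 w2 w3
    assume "w \<in> W" "w1 \<in> W" "le w w1" and h1: "\<forall>x\<in>W. le w1 x \<longrightarrow> sat W le R V x a \<longrightarrow> sat W le R V x c"
      and "w2 \<in> W" "le w1 w2" and h2: "\<forall>x\<in>W. le w2 x \<longrightarrow> sat W le R V x b \<longrightarrow> sat W le R V x c"
      and "w3 \<in> W" "le w2 w3" "sat W le R V w3 a \<or> sat W le R V w3 b"
    then show "sat W le R V w3 c" using T[of w1 w2 w3] Rf[of w3] by blast
  qed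
  show "valid_in W le R V (Imp (Box a (And b c)) (And (Box a b) (Box a c)))"
    unfolding valid_in_def by auto
  show "valid_in W le R V (Imp (And (Box a b) (Box a c)) (Box a (And b c)))"
    unfolding valid_in_def by auto
  show "valid_in W le R V (Neg (Dia a Bot))"
    unfolding valid_in_def Neg_def using Rf by auto
  show "valid_in W le R V (Imp (Box a (Imp b c)) (Imp (Dia a b) (Dia a c)))"
    unfolding valid_in_def
  proof (unfold sat.simps, intro ballI impI)
    fix w w1 w2 w3
    assume "w \<in> W" "w1 \<in> W" "le w w1" and h1: "\<forall>x\<in>W. \<forall>v\<in>W. le w1 x \<longrightarrow> R {u \<in> W. sat W le R V u a} x v \<longrightarrow> (\<forall>y\<in>W. le v y \<longrightarrow> sat W le R V y b \<longrightarrow> sat W le R V y c)"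
      and "w2 \<in> W" "le w1 w2" and h2: "\<forall>x\<in>W. le w2 x \<longrightarrow> (\<exists>v\<in>W. R {u \<in> W. sat W le R V u a} x v \<and> sat W le R V v b)"
      and "w3 \<in> W" "le w2 w3"
    then obtain v where "v \<in> W" "R {u \<in> W. sat W le R V u a} w3 v" "sat W le R V v b" by blast
    then show "\<exists>v\<in>W. R {u \<in> W. sat W le R V u a} w3 v \<and> sat W le R V v c"
      using h1 T[of w1 w2 w3] Rf[of v] \<open>w3 \<in> W\<close> \<open>w2 \<in> W\<close> \<open>w1 \<in> W\<close> \<open>le w1 w2\<close> \<open>le w2 w3\<close> by blast
  qed
qed

lemma soundness:
  assumes m: "chellas_model W le V" and E: "\<forall>e\<in>E. valid_in W le R V e"
  shows "derivable E a \<Longrightarrow> valid_in W le R V a"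
proof (induction rule: derivable.induct)
  case (ax_extra a)
  then show ?case using E by blast
next
  case (mp a b)
  have "\<forall>w\<in>W. sat W le R V w a \<longrightarrow> sat W le R V w b" using mp.IH(1) valid_imp[OF m] by blast
  then show ?case using mp.IH(2) unfolding valid_in_def by blast
next
  case (RA_box a r b)
  then have "{u\<in>W. sat W le R V u a} = {u\<in>W. sat W le R V u r}" using valid_iff[OF m] by auto
  then show ?case using valid_iff[OF m] by simp
next
  case (RC_box b c a)
  then show ?case using valid_iff[OF m] by simp
next
  case (RA_dia a r b)
  then have "{u\<in>W. sat W le R V u a} = {u\<in>W. sat W le R V u r}" using valid_iff[OF m] by auto
  then show ?case using valid_iff[OF m] by simp
next
  case (RC_dia b c a)
  then show ?case using valid_iff[OF m] by simp
next
  case (ipc1 a b) show ?case by (rule s1[OF m])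
next
  case (ipc2 a b c) show ?case by (rule s2[OF m])
next
  case (ipc3 a b) show ?case by (simp add: valid_in_def)
next
  case (ipc4 a b) show ?case by (simp add: valid_in_def)
next
  case (ipc5 a b) show ?case by (rule s5[OF m])
next
  case (ipc6 a b) show ?case by (simp add: valid_in_def)
next
  case (ipc7 a b) show ?case by (simp add: valid_in_def)
next
  case (ipc8 a c b) show ?case by (rule s8[OF m])
next
  case (ipc9 a) show ?case by (simp add: valid_in_def)
next
  case (CM_box a b c) show ?case by (rule scm[OF m])
next
  case (CC_box a b c) show ?case by (rule scc[OF m])
next
  case (CN_box a) show ?case by (simp add: valid_in_def Top_def Neg_def)
next
  case (CN_dia a) show ?case by (rule scnd[OF m])
next
  case (CK_dia a b c) show ?case by (rule sck[OF m])
qed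

lemma ID_valid:
  assumes m: "chellas_model W le V" and p: "prop_id W R"
  shows "\<forall>e\<in>ID_ax. valid_in W le R V e"
proof -
  have "sat W le R V w (Box a a)" if "w \<in> W" for w a
  proof (unfold sat.simps, intro ballI impI)
    fix w' v assume "w' \<in> W" "v \<in> W" "R {u \<in> W. sat W le R V u a} w' v"
    moreover have "{u \<in> W. sat W le R V u a} \<subseteq> W" by blast
    ultimately have "v \<in> {u \<in> W. sat W le R V u a}" using p unfolding prop_id_def by blast
    then show "sat W le R V v a" by blast
  qed
  then show ?thesis unfolding ID_ax_def valid_in_def by blast
qed

lemma MP_valid:
  assumes m: "chellas_model W le V" and p: "prop_mp W R"
  shows "\<forall>e\<in>MP_ax. valid_in W le R V e"
proof -
  note P = persist[OF m] and T = cm_trans[OF m] and Rf = cm_refl[OF m]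
  have mpR: "R {u \<in> W. sat W le R V u a} w w" if "w \<in> W" "sat W le R V w a" for w a
  proof -
    have "{u \<in> W. sat W le R V u a} \<subseteq> W" by blast
    then show ?thesis using p that unfolding prop_mp_def by blast
  qed
  have 1: "valid_in W le R V (Imp (Box a b) (Imp a b))" for a b
    unfolding valid_in_def
  proof (unfold sat.simps, intro ballI impI)
    fix w w1 w2
    assume "w \<in> W" "w1 \<in> W" "le w w1" and h1: "\<forall>x\<in>W. \<forall>v\<in>W. le w1 x \<longrightarrow> R {u \<in> W. sat W le R V u a} x v \<longrightarrow> sat W le R V v b"
      and "w2 \<in> W" "le w1 w2" "sat W le R V w2 a"
    moreover have "R {u \<in> W. sat W le R V u a} w2 w2" using mpR[OF \<open>w2 \<in> W\<close> \<open>sat W le R V w2 a\<close>] .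
    ultimately show "sat W le R V w2 b" using \<open>w2 \<in> W\<close> T[of w w1 w2] \<open>w \<in> W\<close> by blast
  qed
  have 2: "valid_in W le R V (Imp (And a b) (Dia a b))" for a b
    unfolding valid_in_def
  proof (unfold sat.simps, intro ballI impI)
    fix w w1 w2
    assume "w \<in> W" "w1 \<in> W" "le w w1" "sat W le R V w1 a \<and> sat W le R V w1 b"
      "w2 \<in> W" "le w1 w2"
    then have "sat W le R V w2 a" "sat W le R V w2 b" using P[of w1 w2] by auto
    moreover have "R {u \<in> W. sat W le R V u a} w2 w2" using mpR[OF \<open>w2 \<in> W\<close> \<open>sat W le R V w2 a\<close>] .
    ultimately show "\<exists>v\<in>W. R {u \<in> W. sat W le R V u a} w2 v \<and> sat W le R V v b" using \<open>w2 \<in> W\<close> by blast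
  qed
  show ?thesis unfolding MP_ax_def using 1 2 by auto
qed

lemma sound_class:
  assumes d: "derivable E a" and h: "\<And>(W::'w set) le R V. chellas_model W le V \<Longrightarrow> P W R \<Longrightarrow> \<forall>e\<in>E. valid_in W le R V e"
  shows "valid_class TYPE('w) P a"
  unfolding valid_class_def
proof (intro allI impI)
  fix W :: "'w set" and le R V
  assume a: "chellas_model W le V \<and> P W R"
  then have m: "chellas_model W le V" and "P W R" by auto
  then have "\<forall>e\<in>E. valid_in W le R V e" using h by blast
  then show "valid_in W le R V a" using soundness[OF m _ d] by blast
qed


inductive dv :: "form set \<Rightarrow> form set \<Rightarrow> form \<Rightarrow> bool" for E G where
  dhyp: "a \<in> G \<Longrightarrow> dv E G a"
| dthm: "derivable E a \<Longrightarrow> dv E G a"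
| dmp: "dv E G (Imp a b) \<Longrightarrow> dv E G a \<Longrightarrow> dv E G b"

lemma der_id: "derivable E (Imp a a)"
  using derivable.mp[OF derivable.mp[OF derivable.ipc2[of E a "Imp a a" a] derivable.ipc1[of E a "Imp a a"]] derivable.ipc1[of E a a]] .

lemma deduction: "dv E (insert a G) b \<Longrightarrow> dv E G (Imp a b)"
proof (induction rule: dv.induct)
  case (dhyp b)
  then show ?case
  proof
    assume "b = a" then show ?thesis using der_id dv.dthm by blast
  next
    assume "b \<in> G" then show ?thesis using dv.dmp[OF dv.dthm[OF derivable.ipc1] dv.dhyp] by blast
  qed
next
  case (dthm b)
  then show ?case using dv.dmp[OF dv.dthm[OF derivable.ipc1] dv.dthm] by blast
next
  case (dmp b c)
  then show ?case using dv.dmp[OF dv.dmp[OF dv.dthm[OF derivable.ipc2]]] by blast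
qed

lemma dv_mono: "dv E G a \<Longrightarrow> G \<subseteq> H \<Longrightarrow> dv E H a"
  by (induction rule: dv.induct) (auto intro: dv.intros)

lemma dv_empty: "dv E G a \<Longrightarrow> G = {} \<Longrightarrow> derivable E a"
  by (induction rule: dv.induct) (auto intro: derivable.mp)

lemma dv_compact: "dv E G a \<Longrightarrow> \<exists>G0. G0 \<subseteq> G \<and> finite G0 \<and> dv E G0 a"
proof (induction rule: dv.induct)
  case (dhyp a) then show ?case by (intro exI[of _ "{a}"]) (auto intro: dv.intros)
next
  case (dthm a) then show ?case by (intro exI[of _ "{}"]) (auto intro: dv.intros)
next
  case (dmp a b)
  then obtain G1 G2 where "G1 \<subseteq> G" "finite G1" "dv E G1 (Imp a b)" "G2 \<subseteq> G" "finite G2" "dv E G2 a" by blast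
  then show ?case
    by (intro exI[of _ "G1 \<union> G2"]) (auto intro: dv.dmp dv_mono)
qed

lemma dv_undeduct: "dv E G (Imp a b) \<Longrightarrow> dv E (insert a G) b"
  by (meson dv.dhyp dv.dmp dv_mono insertI1 subset_insertI)

definition closed :: "form set \<Rightarrow> form set \<Rightarrow> bool" where
  "closed E G \<longleftrightarrow> (\<forall>a. dv E G a \<longrightarrow> a \<in> G)"

definition ptheory :: "form set \<Rightarrow> form set \<Rightarrow> bool" where
  "ptheory E G \<longleftrightarrow> closed E G \<and> Bot \<notin> G \<and> (\<forall>a b. Or a b \<in> G \<longrightarrow> a \<in> G \<or> b \<in> G)"

lemma lindenbaum:
  assumes c: "\<not> dv E G c"
  shows "\<exists>D. G \<subseteq> D \<and> ptheory E D \<and> c \<notin> D"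
proof -
  let ?A = "{D. G \<subseteq> D \<and> \<not> dv E D c}"
  have "\<exists>M\<in>?A. \<forall>X\<in>?A. M \<subseteq> X \<longrightarrow> X = M"
  proof (rule subset_Zorn_nonempty)
    have "G \<in> ?A" using c by simp
    then show "?A \<noteq> {}" by auto
  next
    fix C assume ne: "C \<noteq> {}" and ch: "subset.chain ?A C"
    then have CA: "C \<subseteq> ?A" unfolding subset.chain_def by (simp only:)
    show "\<Union>C \<in> ?A"
    proof (simp only: mem_Collect_eq, intro conjI notI)
      obtain X where "X \<in> C" using ne by auto
      then show "G \<subseteq> \<Union>C" using CA by auto
    next
      assume "dv E (\<Union>C) c"
      then obtain G0 where g0: "G0 \<subseteq> \<Union>C" "finite G0" "dv E G0 c" using dv_compact[of E "\<Union>C" c] by blast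
      obtain B where "B \<in> C" "G0 \<subseteq> B" by (rule finite_subset_Union_chain[OF g0(2) g0(1) ne ch])
      then have "dv E B c" using dv_mono[OF g0(3)] by simp
      then show False using CA \<open>B \<in> C\<close> by auto
    qed
  qed
  then obtain M where M0: "M \<in> ?A" and mx0: "\<forall>X\<in>?A. M \<subseteq> X \<longrightarrow> X = M"
    by (rule bexE)
  from M0 have M: "G \<subseteq> M" "\<not> dv E M c" by simp_all
  have mx: "X = M" if "G \<subseteq> X" "\<not> dv E X c" "M \<subseteq> X" for X
    using mx0 that by simp
  have ins: "dv E (insert a M) c" if "a \<notin> M" for a
  proof (rule ccontr)
    assume "\<not> dv E (insert a M) c"
    moreover have "G \<subseteq> insert a M" "M \<subseteq> insert a M" using M by auto
    ultimately have "insert a M = M" using mx by metis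
    then show False using that by auto
  qed
  have cl: "closed E M" unfolding closed_def
  proof (intro allI impI)
    fix a assume a: "dv E M a"
    show "a \<in> M"
    proof (rule ccontr)
      assume "a \<notin> M"
      then have "dv E M (Imp a c)" using ins deduction by metis
      then have "dv E M c" using a dv.dmp by metis
      then show False using M by metis
    qed
  qed
  have bot: "Bot \<notin> M"
  proof
    assume "Bot \<in> M"
    then have "dv E M c" using dv.dmp[OF dv.dthm[OF derivable.ipc9] dv.dhyp] by metis
    then show False using M by metis
  qed
  have pr: "a \<in> M \<or> b \<in> M" if "Or a b \<in> M" for a b
  proof (rule ccontr)
    assume "\<not> (a \<in> M \<or> b \<in> M)"
    then have "a \<notin> M" "b \<notin> M" by auto
    then have 1: "dv E M (Imp a c)" and 2: "dv E M (Imp b c)" using ins deduction by metis+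
    have "dv E M c"
      using dv.dmp[OF dv.dmp[OF dv.dmp[OF dv.dthm[OF derivable.ipc8] 1] 2] dv.dhyp[OF that]] .
    then show False using M by metis
  qed
  have "c \<notin> M" using M dv.dhyp by metis
  then show ?thesis using M(1) cl bot pr unfolding ptheory_def by auto
qed

lemma pt_dv: "ptheory E D \<Longrightarrow> dv E D a \<Longrightarrow> a \<in> D"
  unfolding ptheory_def closed_def by blast

lemma pt_thm: "ptheory E D \<Longrightarrow> derivable E a \<Longrightarrow> a \<in> D"
  using pt_dv dv.dthm by blast

lemma pt_mp: "ptheory E D \<Longrightarrow> Imp a b \<in> D \<Longrightarrow> a \<in> D \<Longrightarrow> b \<in> D"
  using pt_dv dv.dmp dv.dhyp by metis

lemma pt_bot: "ptheory E D \<Longrightarrow> Bot \<notin> D"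
  unfolding ptheory_def by blast

lemma pt_and: "ptheory E D \<Longrightarrow> And a b \<in> D \<longleftrightarrow> a \<in> D \<and> b \<in> D"
  using pt_mp[OF _ pt_thm[OF _ derivable.ipc3]] pt_mp[OF _ pt_thm[OF _ derivable.ipc4]]
    pt_mp[OF _ pt_mp[OF _ pt_thm[OF _ derivable.ipc5]]] by metis

lemma pt_or: "ptheory E D \<Longrightarrow> Or a b \<in> D \<longleftrightarrow> a \<in> D \<or> b \<in> D"
  using pt_mp[OF _ pt_thm[OF _ derivable.ipc6]] pt_mp[OF _ pt_thm[OF _ derivable.ipc7]]
  unfolding ptheory_def by metis

lemma pt_iff: "ptheory E D \<Longrightarrow> derivable E (Iff a b) \<Longrightarrow> a \<in> D \<longleftrightarrow> b \<in> D"
  unfolding Iff_def using pt_thm pt_and pt_mp by metis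

lemma der_iff_intro: "derivable E (Imp a b) \<Longrightarrow> derivable E (Imp b a) \<Longrightarrow> derivable E (Iff a b)"
  unfolding Iff_def using derivable.mp derivable.ipc5 by metis

lemma dv_single: "dv E {a} b \<Longrightarrow> derivable E (Imp a b)"
  using deduction dv_empty by blast

lemma box_mono:
  assumes D: "ptheory E D" and d: "derivable E (Imp c d)" and b: "Box a c \<in> D"
  shows "Box a d \<in> D"
proof -
  have "dv E {c} (And c d)"
    using dv.dmp[OF dv.dmp[OF dv.dthm[OF derivable.ipc5] dv.dhyp] dv.dmp[OF dv.dthm[OF d] dv.dhyp]] by blast
  then have "derivable E (Iff c (And c d))"
    using der_iff_intro dv_single derivable.ipc3 by blast
  then have "derivable E (Iff (Box a c) (Box a (And c d)))" by (rule derivable.RC_box)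
  then have "Box a (And c d) \<in> D" using pt_iff[OF D] b by blast
  then have "And (Box a c) (Box a d) \<in> D" using pt_mp[OF D pt_thm[OF D derivable.CM_box]] by blast
  then show ?thesis using pt_and[OF D] by blast
qed

lemma box_dv:
  assumes D: "ptheory E D"
  shows "dv E G c \<Longrightarrow> G = {\<chi>. Box a \<chi> \<in> D} \<Longrightarrow> Box a c \<in> D"
proof (induction rule: dv.induct)
  case (dhyp c) then show ?case by blast
next
  case (dthm c)
  then have "derivable E (Imp Top c)" using derivable.mp derivable.ipc1 by blast
  then show ?case using box_mono[OF D _ pt_thm[OF D derivable.CN_box]] by blast
next
  case (dmp c d)
  then have "And (Box a (Imp c d)) (Box a c) \<in> D" using pt_and[OF D] by blast
  then have "Box a (And (Imp c d) c) \<in> D" using pt_mp[OF D pt_thm[OF D derivable.CC_box]] by blast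
  moreover have "dv E {And (Imp c d) c} d"
    using dv.dmp[OF dv.dmp[OF dv.dthm[OF derivable.ipc3] dv.dhyp] dv.dmp[OF dv.dthm[OF derivable.ipc4] dv.dhyp]] by blast
  ultimately show ?case using box_mono[OF D] dv_single by blast
qed



definition cW :: "form set \<Rightarrow> (form set \<times> form) set" where
  "cW E = {x. ptheory E (fst x)}"
definition cle :: "form set \<times> form \<Rightarrow> form set \<times> form \<Rightarrow> bool" where
  "cle x y \<longleftrightarrow> fst x \<subseteq> fst y"
definition cV :: "form set \<times> form \<Rightarrow> nat set" where
  "cV x = {p. Atom p \<in> fst x}"
definition cext :: "form set \<Rightarrow> form \<Rightarrow> (form set \<times> form) set" where
  "cext E f = {x \<in> cW E. f \<in> fst x}"
definition ccond :: "form \<Rightarrow> form set \<times> form \<Rightarrow> form set \<times> form \<Rightarrow> bool" where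
  "ccond f x y \<longleftrightarrow> (\<forall>c. Box f c \<in> fst x \<longrightarrow> c \<in> fst y) \<and> (Dia f (snd x) \<notin> fst x \<longrightarrow> snd x \<notin> fst y)"
definition cR :: "form set \<Rightarrow> (form set \<times> form) set \<Rightarrow> form set \<times> form \<Rightarrow> form set \<times> form \<Rightarrow> bool" where
  "cR E X x y \<longleftrightarrow> (\<exists>f. X = cext E f \<and> ccond f x y) \<or> ((\<forall>f. X \<noteq> cext E f) \<and> x = y \<and> x \<in> X)"

lemma cext_eq:
  assumes "cext E a = cext E b"
  shows "derivable E (Iff a b)"
proof -
  have 1: "derivable E (Imp a b)" if e: "cext E a = cext E b" for a b
  proof (rule ccontr)
    assume n: "\<not> derivable E (Imp a b)"
    have nd: "\<not> dv E {a} b" using n dv_single by blast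
    obtain D where D: "{a} \<subseteq> D" "ptheory E D" "b \<notin> D" using lindenbaum[OF nd] by blast
    then have "(D, Bot) \<in> cext E a" "(D, Bot) \<notin> cext E b" unfolding cext_def cW_def by auto
    then show False using e by simp
  qed
  show ?thesis using 1[OF assms] 1[OF assms[symmetric]] der_iff_intro by blast
qed

lemma ccond_cong:
  assumes e: "cext E a = cext E b" and x: "x \<in> cW E"
  shows "ccond a x y = ccond b x y"
proof -
  have D: "ptheory E (fst x)" using x unfolding cW_def by simp
  have d: "derivable E (Iff a b)" using cext_eq[OF e] .
  have "Box a c \<in> fst x \<longleftrightarrow> Box b c \<in> fst x" for c
    using pt_iff[OF D derivable.RA_box[OF d]] .
  moreover have "Dia a c \<in> fst x \<longleftrightarrow> Dia b c \<in> fst x" for c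
    using pt_iff[OF D derivable.RA_dia[OF d]] .
  ultimately show ?thesis unfolding ccond_def by simp
qed

lemma cR_ext:
  assumes x: "x \<in> cW E"
  shows "cR E (cext E a) x y \<longleftrightarrow> ccond a x y"
  unfolding cR_def using ccond_cong[OF _ x] by metis

lemma truth:
  "x \<in> cW E \<Longrightarrow> sat (cW E) cle (cR E) cV x a \<longleftrightarrow> a \<in> fst x"
proof (induction a arbitrary: x)
  case (Atom p)
  then show ?case by (simp add: cV_def)
next
  case Bot
  then show ?case using pt_bot unfolding cW_def by auto
next
  case (And a b)
  then show ?case using pt_and unfolding cW_def by auto
next
  case (Or a b)
  then show ?case using pt_or unfolding cW_def by auto
next
  case (Imp a b)
  have D: "ptheory E (fst x)" using Imp.prems unfolding cW_def by simp
  show ?case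
  proof
    assume s: "sat (cW E) cle (cR E) cV x (Imp a b)"
    show "Imp a b \<in> fst x"
    proof (rule ccontr)
      assume n: "Imp a b \<notin> fst x"
      have nd: "\<not> dv E (insert a (fst x)) b"
      proof
        assume "dv E (insert a (fst x)) b"
        then have dd: "dv E (fst x) (Imp a b)" by (rule deduction)
        show False using n pt_dv[OF D dd] by simp
      qed
      obtain D' where D': "insert a (fst x) \<subseteq> D'" "ptheory E D'" "b \<notin> D'" using lindenbaum[OF nd] by blast
      have w: "(D', Bot) \<in> cW E" using D' unfolding cW_def by simp
      have "cle x (D', Bot)" using D' unfolding cle_def by auto
      moreover have "sat (cW E) cle (cR E) cV (D', Bot) a" using Imp.IH(1)[OF w] D' by simp
      moreover have "\<forall>w'\<in>cW E. cle x w' \<longrightarrow> sat (cW E) cle (cR E) cV w' a \<longrightarrow> sat (cW E) cle (cR E) cV w' b"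
        using s by (simp only: sat.simps)
      ultimately have "sat (cW E) cle (cR E) cV (D', Bot) b" using w by blast
      then show False using Imp.IH(2)[OF w] D' by simp
    qed
  next
    assume i: "Imp a b \<in> fst x"
    show "sat (cW E) cle (cR E) cV x (Imp a b)"
    proof (unfold sat.simps, intro ballI impI)
      fix w' assume w': "w' \<in> cW E" "cle x w'" "sat (cW E) cle (cR E) cV w' a"
      have D': "ptheory E (fst w')" using w' unfolding cW_def by simp
      have "a \<in> fst w'" using Imp.IH(1)[OF w'(1)] w'(3) by simp
      moreover have "Imp a b \<in> fst w'" using i w'(2) unfolding cle_def by auto
      ultimately have "b \<in> fst w'" using pt_mp[OF D'] by blast
      then show "sat (cW E) cle (cR E) cV w' b" using Imp.IH(2)[OF w'(1)] by simp
    qed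
  qed
next
  case (Box a b)
  have D: "ptheory E (fst x)" using Box.prems unfolding cW_def by simp
  have ex: "{u \<in> cW E. sat (cW E) cle (cR E) cV u a} = cext E a"
    unfolding cext_def using Box.IH(1) by auto
  have "sat (cW E) cle (cR E) cV x (Box a b) \<longleftrightarrow>
        (\<forall>w'\<in>cW E. \<forall>v\<in>cW E. cle x w' \<longrightarrow> ccond a w' v \<longrightarrow> b \<in> fst v)"
    using cR_ext Box.IH(2) by (simp only: sat.simps ex) metis
  also have "\<dots> \<longleftrightarrow> Box a b \<in> fst x"
  proof
    assume s: "\<forall>w'\<in>cW E. \<forall>v\<in>cW E. cle x w' \<longrightarrow> ccond a w' v \<longrightarrow> b \<in> fst v"
    show "Box a b \<in> fst x"
    proof (rule ccontr)
      assume n: "Box a b \<notin> fst x"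
      have nd: "\<not> dv E {c. Box a c \<in> fst x} b" using box_dv[OF D] n by blast
      obtain D' where D': "{c. Box a c \<in> fst x} \<subseteq> D'" "ptheory E D'" "b \<notin> D'" using lindenbaum[OF nd] by blast
      have w: "(D', Bot) \<in> cW E" using D' unfolding cW_def by simp
      have "ccond a (fst x, Bot) (D', Bot)" using D' pt_bot[OF D'(2)] unfolding ccond_def by auto
      moreover have "cle x (fst x, Bot)" unfolding cle_def by simp
      moreover have "(fst x, Bot) \<in> cW E" using D unfolding cW_def by simp
      ultimately have "b \<in> fst (D', Bot)" using s w by blast
      then show False using D'(3) by simp
    qed
  next
    assume i: "Box a b \<in> fst x"
    show "\<forall>w'\<in>cW E. \<forall>v\<in>cW E. cle x w' \<longrightarrow> ccond a w' v \<longrightarrow> b \<in> fst v"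
      using i unfolding cle_def ccond_def by auto
  qed
  finally show ?case .
next
  case (Dia a b)
  have D: "ptheory E (fst x)" using Dia.prems unfolding cW_def by simp
  have ex: "{u \<in> cW E. sat (cW E) cle (cR E) cV u a} = cext E a"
    unfolding cext_def using Dia.IH(1) by auto
  have "sat (cW E) cle (cR E) cV x (Dia a b) \<longleftrightarrow>
        (\<forall>w'\<in>cW E. cle x w' \<longrightarrow> (\<exists>v\<in>cW E. ccond a w' v \<and> b \<in> fst v))"
    using cR_ext Dia.IH(2) by (simp only: sat.simps ex) metis
  also have "\<dots> \<longleftrightarrow> Dia a b \<in> fst x"
  proof
    assume s: "\<forall>w'\<in>cW E. cle x w' \<longrightarrow> (\<exists>v\<in>cW E. ccond a w' v \<and> b \<in> fst v)"
    show "Dia a b \<in> fst x"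
    proof (rule ccontr)
      assume n: "Dia a b \<notin> fst x"
      have w: "(fst x, b) \<in> cW E" using D unfolding cW_def by simp
      have "cle x (fst x, b)" unfolding cle_def by simp
      then obtain v where "ccond a (fst x, b) v" "b \<in> fst v" using s w by blast
      then show False using n unfolding ccond_def by simp
    qed
  next
    assume i: "Dia a b \<in> fst x"
    show "\<forall>w'\<in>cW E. cle x w' \<longrightarrow> (\<exists>v\<in>cW E. ccond a w' v \<and> b \<in> fst v)"
    proof (intro ballI impI)
      fix w' assume w': "w' \<in> cW E" "cle x w'"
      have D': "ptheory E (fst w')" using w' unfolding cW_def by simp
      have ib: "Dia a b \<in> fst w'" using i w' unfolding cle_def by auto
      define t where "t = snd w'"
      define \<tau> where "\<tau> = (if Dia a t \<in> fst w' then Bot else t)"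
      let ?B = "{c. Box a c \<in> fst w'}"
      have nd: "\<not> dv E (insert b ?B) \<tau>"
      proof
        assume "dv E (insert b ?B) \<tau>"
        then have "dv E ?B (Imp b \<tau>)" by (rule deduction)
        then have "Box a (Imp b \<tau>) \<in> fst w'" using box_dv[OF D'] by blast
        then have di: "Dia a \<tau> \<in> fst w'"
          using pt_mp[OF D' pt_mp[OF D' pt_thm[OF D' derivable.CK_dia]]] ib by blast
        show False
        proof (cases "Dia a t \<in> fst w'")
          case True
          then have "\<tau> = Bot" unfolding \<tau>_def by simp
          then have "Bot \<in> fst w'" using di pt_mp[OF D' pt_thm[OF D' derivable.CN_dia[unfolded Neg_def]]]
            unfolding Neg_def by blast
          then show False using pt_bot[OF D'] by blast
        next
          case False
          then show False using di unfolding \<tau>_def by simp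
        qed
      qed
      obtain D'' where D'': "insert b ?B \<subseteq> D''" "ptheory E D''" "\<tau> \<notin> D''"
        using lindenbaum[OF nd] by blast
      have v: "(D'', Bot) \<in> cW E" using D'' unfolding cW_def by simp
      have "ccond a w' (D'', Bot)"
        using D'' unfolding ccond_def t_def[symmetric] \<tau>_def by (auto split: if_splits)
      then show "\<exists>v\<in>cW E. ccond a w' v \<and> b \<in> fst v" using v D'' by auto
    qed
  qed
  finally show ?case .
qed



abbreviation tle :: "('v \<Rightarrow> 'u) \<Rightarrow> ('v \<Rightarrow> 'v \<Rightarrow> bool) \<Rightarrow> 'u \<Rightarrow> 'u \<Rightarrow> bool" where
  "tle f le \<equiv> \<lambda>x y. le (inv f x) (inv f y)"
abbreviation tR :: "('v \<Rightarrow> 'u) \<Rightarrow> ('v set \<Rightarrow> 'v \<Rightarrow> 'v \<Rightarrow> bool) \<Rightarrow> 'u set \<Rightarrow> 'u \<Rightarrow> 'u \<Rightarrow> bool" where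
  "tR f R \<equiv> \<lambda>X x y. R (f -` X) (inv f x) (inv f y)"
abbreviation tV :: "('v \<Rightarrow> 'u) \<Rightarrow> ('v \<Rightarrow> nat set) \<Rightarrow> 'u \<Rightarrow> nat set" where
  "tV f V \<equiv> \<lambda>x. V (inv f x)"

lemma sat_transfer:
  assumes f: "inj f"
  shows "w \<in> W \<Longrightarrow> sat (f ` W) (tle f le) (tR f R) (tV f V) (f w) a = sat W le R V w a"
proof (induction a arbitrary: w)
  case (Atom p) then show ?case using f by simp
next
  case (Imp a b) then show ?case using f by simp
next
  case (Box a b)
  have "f -` {u \<in> f ` W. sat (f ` W) (tle f le) (tR f R) (tV f V) u a} = {u \<in> W. sat W le R V u a}"
    using Box.IH(1) f by (auto simp: inj_image_mem_iff)
  then show ?case using f Box.IH(2) by simp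
next
  case (Dia a b)
  have "f -` {u \<in> f ` W. sat (f ` W) (tle f le) (tR f R) (tV f V) u a} = {u \<in> W. sat W le R V u a}"
    using Dia.IH(1) f by (auto simp: inj_image_mem_iff)
  then show ?case using f Dia.IH(2) by simp
qed auto

lemma cm_transfer:
  assumes f: "inj f" and m: "chellas_model W le V"
  shows "chellas_model (f ` W) (tle f le) (tV f V)"
  unfolding chellas_model_def
proof (intro conjI ballI impI)
  show "f ` W \<noteq> {}" using m unfolding chellas_model_def by simp
next
  fix w assume "w \<in> f ` W"
  then obtain u where "u \<in> W" "w = f u" by blast
  then show "le (inv f w) (inv f w)" using cm_refl[OF m] f by simp
next
  fix x y z assume "x \<in> f ` W" "y \<in> f ` W" "z \<in> f ` W"
    and l: "le (inv f x) (inv f y)" "le (inv f y) (inv f z)"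
  then obtain u v w where "u \<in> W" "x = f u" "v \<in> W" "y = f v" "w \<in> W" "z = f w" by blast
  then show "le (inv f x) (inv f z)" using cm_trans[OF m, of u v w] f l by simp
next
  fix x y assume "x \<in> f ` W" "y \<in> f ` W" and l: "le (inv f x) (inv f y)"
  then obtain u v where "u \<in> W" "x = f u" "v \<in> W" "y = f v" by blast
  then show "V (inv f x) \<subseteq> V (inv f y)" using cm_mono[OF m, of u v] f l by simp
qed

lemma id_transfer:
  assumes f: "inj f" and p: "prop_id W R"
  shows "prop_id (f ` W) (tR f R)"
  unfolding prop_id_def
proof (intro allI impI ballI)
  fix X x y assume X: "X \<subseteq> f ` W" and x: "x \<in> f ` W" and y: "y \<in> f ` W" and r: "R (f -` X) (inv f x) (inv f y)"
  obtain u v where uv: "x = f u" "y = f v" "u \<in> W" "v \<in> W" using x y by blast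
  have "f -` X \<subseteq> W"
  proof
    fix z assume "z \<in> f -` X"
    then have "f z \<in> f ` W" using X by auto
    then show "z \<in> W" using f by (simp add: inj_image_mem_iff)
  qed
  moreover have "R (f -` X) u v" using r uv f by simp
  ultimately have "v \<in> f -` X" using p uv unfolding prop_id_def by blast
  then show "y \<in> X" using uv by simp
qed

lemma mp_transfer:
  assumes f: "inj f" and p: "prop_mp W R"
  shows "prop_mp (f ` W) (tR f R)"
  unfolding prop_mp_def
proof (intro allI impI ballI)
  fix X x assume X: "X \<subseteq> f ` W" and x: "x \<in> f ` W" and xX: "x \<in> X"
  obtain u where u: "x = f u" "u \<in> W" using x by blast
  have "f -` X \<subseteq> W"
  proof
    fix z assume "z \<in> f -` X"
    then have "f z \<in> f ` W" using X by auto
    then show "z \<in> W" using f by (simp add: inj_image_mem_iff)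
  qed
  moreover have "u \<in> f -` X" using u xX by simp
  ultimately have "R (f -` X) u u" using p u unfolding prop_mp_def by blast
  then show "R (f -` X) (inv f x) (inv f x)" using u f by simp
qed

lemma c_model: "cW E \<noteq> {} \<Longrightarrow> chellas_model (cW E) cle cV"
  unfolding chellas_model_def cle_def cV_def by auto

lemma c_id:
  assumes "ID_ax \<subseteq> E"
  shows "prop_id (cW E) (cR E)"
  unfolding prop_id_def
proof (intro allI impI ballI)
  fix X x y assume X: "X \<subseteq> cW E" and x: "x \<in> cW E" and y: "y \<in> cW E" and r: "cR E X x y"
  show "y \<in> X"
  proof (cases "\<exists>f. X = cext E f \<and> ccond f x y")
    case True
    then obtain f where f: "X = cext E f" "ccond f x y" by blast
    have "Box f f \<in> ID_ax" unfolding ID_ax_def by blast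
    then have "Box f f \<in> fst x" using pt_thm[of E "fst x"] x assms derivable.ax_extra unfolding cW_def by blast
    then have "f \<in> fst y" using f(2) unfolding ccond_def by blast
    then show ?thesis using f(1) y unfolding cext_def by blast
  next
    case False
    then show ?thesis using r unfolding cR_def by blast
  qed
qed

lemma c_mp:
  assumes E: "MP_ax \<subseteq> E"
  shows "prop_mp (cW E) (cR E)"
  unfolding prop_mp_def
proof (intro allI impI ballI)
  fix X x assume X: "X \<subseteq> cW E" and x: "x \<in> cW E" and xX: "x \<in> X"
  have D: "ptheory E (fst x)" using x unfolding cW_def by simp
  have ax: "a \<in> fst x" if "a \<in> MP_ax" for a using pt_thm[OF D derivable.ax_extra] E that by blast
  show "cR E X x x"
  proof (cases "\<exists>f. X = cext E f")
    case True
    then obtain f where f: "X = cext E f" by blast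
    then have fx: "f \<in> fst x" using xX unfolding cext_def by blast
    have "c \<in> fst x" if "Box f c \<in> fst x" for c
    proof -
      have "Imp (Box f c) (Imp f c) \<in> fst x" using ax unfolding MP_ax_def by blast
      then show ?thesis using pt_mp[OF D] that fx by blast
    qed
    moreover have "Dia f (snd x) \<in> fst x" if "snd x \<in> fst x"
    proof -
      have "Imp (And f (snd x)) (Dia f (snd x)) \<in> fst x" using ax unfolding MP_ax_def by blast
      moreover have "And f (snd x) \<in> fst x" using pt_and[OF D] fx that by blast
      ultimately show ?thesis using pt_mp[OF D] by blast
    qed
    ultimately have "ccond f x x" unfolding ccond_def by blast
    then show ?thesis using f unfolding cR_def by blast
  next
    case False
    then show ?thesis using xX unfolding cR_def by blast
  qed
qed

definition enc :: "form set \<times> form \<Rightarrow> form set set" where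
  "enc x = {insert (Dia (snd x) (snd x)) (Imp (snd x) ` fst x)}"

lemma inj_enc: "inj enc"
proof (rule injI)
  fix x y assume e: "enc x = enc y"
  obtain G t where x: "x = (G, t)" by (cases x)
  obtain H s where y: "y = (H, s)" by (cases y)
  have eq: "insert (Dia t t) (Imp t ` G) = insert (Dia s s) (Imp s ` H)"
    using e unfolding enc_def x y by simp
  then have "Dia t t \<in> insert (Dia s s) (Imp s ` H)" by blast
  then have ts: "t = s" by blast
  have "Imp t ` G = Imp t ` H"
  proof -
    have "Imp t ` G = insert (Dia t t) (Imp t ` G) - {Dia t t}" by auto
    also have "\<dots> = insert (Dia t t) (Imp t ` H) - {Dia t t}" using eq ts by simp
    also have "\<dots> = Imp t ` H" by auto
    finally show ?thesis .
  qed
  moreover have "inj (Imp t)" by (rule injI) simp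
  ultimately have "G = H" by (simp add: inj_image_eq_iff)
  then show "x = y" using x y ts by simp
qed

lemma completeness:
  assumes v: "\<And>(W :: form set set set) le R V. chellas_model W le V \<Longrightarrow> P W R \<Longrightarrow> valid_in W le R V a"
    and p: "cW E \<noteq> {} \<Longrightarrow> P (enc ` cW E) (tR enc (cR E))"
  shows "derivable E a"
proof (rule ccontr)
  assume n: "\<not> derivable E a"
  have nd: "\<not> dv E {} a"
  proof
    assume "dv E {} a"
    then have "derivable E a" using dv_empty by blast
    then show False using n by simp
  qed
  obtain D where D: "{} \<subseteq> D" "ptheory E D" "a \<notin> D" using lindenbaum[OF nd] by blast
  have w: "(D, Bot) \<in> cW E" using D unfolding cW_def by simp
  then have ne: "cW E \<noteq> {}" by auto
  have val: "valid_in (enc ` cW E) (tle enc cle) (tR enc (cR E)) (tV enc cV) a"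
    by (rule v[OF cm_transfer[OF inj_enc c_model[OF ne]] p[OF ne]])
  have ew: "enc (D, Bot) \<in> enc ` cW E" using w by (rule imageI)
  have "sat (enc ` cW E) (tle enc cle) (tR enc (cR E)) (tV enc cV) (enc (D, Bot)) a"
    using val ew unfolding valid_in_def by (rule bspec)
  then have "sat (cW E) cle (cR E) cV (D, Bot) a" unfolding sat_transfer[OF inj_enc w] .
  then have "a \<in> D" unfolding truth[OF w] by simp
  then show False using D(3) by simp
qed

theorem theorem12:
  fixes a :: form
  shows
   "(ConstCKID a \<longrightarrow> valid_class TYPE('w) prop_id a) \<and>
    (valid_class TYPE(form set set) prop_id a \<longrightarrow> ConstCKID a) \<and>
    (ConstCKMP a \<longrightarrow> valid_class TYPE('w) prop_mp a) \<and>
    (valid_class TYPE(form set set) prop_mp a \<longrightarrow> ConstCKMP a) \<and>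
    (ConstCKMPID a \<longrightarrow> valid_class TYPE('w) (\<lambda>W R. prop_id W R \<and> prop_mp W R) a) \<and>
    (valid_class TYPE(form set set) (\<lambda>W R. prop_id W R \<and> prop_mp W R) a \<longrightarrow> ConstCKMPID a)"
proof (intro conjI impI)
  assume "ConstCKID a"
  then show "valid_class TYPE('w) prop_id a"
    by (rule sound_class) (rule ID_valid)
next
  assume "ConstCKMP a"
  then show "valid_class TYPE('w) prop_mp a"
    by (rule sound_class) (rule MP_valid)
next
  assume "ConstCKMPID a"
  then show "valid_class TYPE('w) (\<lambda>W R. prop_id W R \<and> prop_mp W R) a"
  proof (rule sound_class)
    fix W :: "'w set" and le R V
    assume m: "chellas_model W le V" and p: "prop_id W R \<and> prop_mp W R"
    show "\<forall>e\<in>MP_ax \<union> ID_ax. valid_in W le R V e"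
      using ID_valid[OF m] MP_valid[OF m] p by blast
  qed
next
  assume v: "valid_class TYPE(form set set) prop_id a"
  show "ConstCKID a"
    by (rule completeness[where P = prop_id])
       (use v in \<open>auto simp: valid_class_def intro: id_transfer[OF inj_enc] c_id\<close>)
next
  assume v: "valid_class TYPE(form set set) prop_mp a"
  show "ConstCKMP a"
    by (rule completeness[where P = prop_mp])
       (use v in \<open>auto simp: valid_class_def intro: mp_transfer[OF inj_enc] c_mp\<close>)
next
  assume v: "valid_class TYPE(form set set) (\<lambda>W R. prop_id W R \<and> prop_mp W R) a"
  show "ConstCKMPID a"
    by (rule completeness[where P = "\<lambda>W R. prop_id W R \<and> prop_mp W R"])
       (use v in \<open>auto simp: valid_class_def intro: mp_transfer[OF inj_enc] c_mp id_transfer[OF inj_enc] c_id\<close>)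
qed


end
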